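(* For every $n\geq 1$, there exists a signed digraph $G$ on $[n]$ such that every nilpotent $G$-function $f:\{0,1,2\}^n\to\{0,1,2\}^n$ has class at least $\lfloor\log_2 n\rfloor+2$. Furthermore, if $n=2^{\lfloor\log_2 n\rfloor+1}-1$, then such a $G$ can be chosen strongly connected.
   Context: A signed digraph is a digraph (loops allowed, no multiple arcs) in which each arc is labeled positive, negative, or null (unsigned). For a finite interval of integers $A$, a function over $A$ is a map $f:A^n\to A^n$; $f^0=\mathrm{id}$, $f^k=f\circ f^{k-1}$. The interaction graph $G(f)$ is the signed digraph on $[n]$ with an arc $(j,i)$ iff $f_i(a)\neq f_i(b)$ for some $a,b\in A^n$ with $a_j<b_j$ and $a_\ell=b_\ell$ for $\ell\neq j$; the arc is positive if $f_i(a)\leq f_i(b)$ for all such pairs, negative if $f_i(a)\geq f_i(b)$ for all such pairs, and null otherwise. $f$ is a $G$-function if $G(f)=G$. $f$ is nilpotent if $f^k$ is constant for some $k\geq 0$; the least such $k$ is its class. *)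

theory Defs
  imports Complex_Main
begin

text \<open>Vertices of a digraph on [n] are 0,...,n-1. Configurations in A^n with
  A = {0,...,q-1} are represented as functions nat => nat that take values
  below q on [n] and are 0 outside [n].\<close>

datatype sign = Pos | Neg | Null

text \<open>A signed digraph: G j i = None means no arc (j,i); Some s means an arc
  (j,i) labelled s.\<close>
type_synonym sdigraph = "nat \<Rightarrow> nat \<Rightarrow> sign option"

definition sdigraph_on :: "nat \<Rightarrow> sdigraph \<Rightarrow> bool" where
  "sdigraph_on n G \<longleftrightarrow> (\<forall>j i. G j i \<noteq> None \<longrightarrow> j < n \<and> i < n)"

definition confs :: "nat \<Rightarrow> nat \<Rightarrow> (nat \<Rightarrow> nat) set" where
  "confs q n = {x. (\<forall>i<n. x i < q) \<and> (\<forall>i\<ge>n. x i = 0)}"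

definition fun_over :: "nat \<Rightarrow> nat \<Rightarrow> ((nat \<Rightarrow> nat) \<Rightarrow> (nat \<Rightarrow> nat)) \<Rightarrow> bool" where
  "fun_over q n f \<longleftrightarrow> f ` confs q n \<subseteq> confs q n"

definition jpairs :: "nat \<Rightarrow> nat \<Rightarrow> nat \<Rightarrow> ((nat \<Rightarrow> nat) \<times> (nat \<Rightarrow> nat)) set" where
  "jpairs q n j = {(a, b). a \<in> confs q n \<and> b \<in> confs q n \<and> a j < b j \<and> (\<forall>l. l \<noteq> j \<longrightarrow> a l = b l)}"

definition interaction_graph :: "nat \<Rightarrow> nat \<Rightarrow> ((nat \<Rightarrow> nat) \<Rightarrow> (nat \<Rightarrow> nat)) \<Rightarrow> sdigraph" where
  "interaction_graph q n f j i =
     (if j < n \<and> i < n \<and> (\<exists>(a, b) \<in> jpairs q n j. f a i \<noteq> f b i) then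
        Some (if (\<forall>(a, b) \<in> jpairs q n j. f a i \<le> f b i) then Pos
              else if (\<forall>(a, b) \<in> jpairs q n j. f a i \<ge> f b i) then Neg
              else Null)
      else None)"

definition is_G_function :: "nat \<Rightarrow> nat \<Rightarrow> sdigraph \<Rightarrow> ((nat \<Rightarrow> nat) \<Rightarrow> (nat \<Rightarrow> nat)) \<Rightarrow> bool" where
  "is_G_function q n G f \<longleftrightarrow> fun_over q n f \<and> interaction_graph q n f = G"

definition iter_const :: "nat \<Rightarrow> nat \<Rightarrow> ((nat \<Rightarrow> nat) \<Rightarrow> (nat \<Rightarrow> nat)) \<Rightarrow> nat \<Rightarrow> bool" where
  "iter_const q n f k \<longleftrightarrow> (\<exists>c. \<forall>x \<in> confs q n. (f ^^ k) x = c)"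

definition nilpotent :: "nat \<Rightarrow> nat \<Rightarrow> ((nat \<Rightarrow> nat) \<Rightarrow> (nat \<Rightarrow> nat)) \<Rightarrow> bool" where
  "nilpotent q n f \<longleftrightarrow> (\<exists>k. iter_const q n f k)"

definition nil_class :: "nat \<Rightarrow> nat \<Rightarrow> ((nat \<Rightarrow> nat) \<Rightarrow> (nat \<Rightarrow> nat)) \<Rightarrow> nat" where
  "nil_class q n f = (LEAST k. iter_const q n f k)"

definition strongly_connected :: "nat \<Rightarrow> sdigraph \<Rightarrow> bool" where
  "strongly_connected n G \<longleftrightarrow>
     (\<forall>i<n. \<forall>j<n. (i, j) \<in> {(u, v). G u v \<noteq> None}\<^sup>*)"

end

theory Submission
  imports Defs
begin


definition nonconst_at :: "nat \<Rightarrow> ((nat\<Rightarrow>nat)\<Rightarrow>(nat\<Rightarrow>nat)) \<Rightarrow> nat \<Rightarrow> nat \<Rightarrow> bool" where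
 "nonconst_at n f t v \<longleftrightarrow> (\<exists>x\<in>confs 3 n. \<exists>y\<in>confs 3 n. (f^^t) x v \<noteq> (f^^t) y v)"

lemma funpow_confs: "fun_over 3 n f \<Longrightarrow> x \<in> confs 3 n \<Longrightarrow> (f^^t) x \<in> confs 3 n"
  by (induction t) (auto simp: fun_over_def)

lemma locality:
  assumes "i < n" "\<forall>j. j \<noteq> p \<longrightarrow> interaction_graph 3 n f j i = None"
    "a \<in> confs 3 n" "b \<in> confs 3 n" "a p = b p"
  shows "f a i = f b i"
proof -
  define c where "c k = (\<lambda>l. if l < k then b l else a l)" for k
  have ck: "c k \<in> confs 3 n \<and> f (c k) i = f a i" for k
  proof (induction k)
    case 0 then show ?case using assms(3) by (simp add: c_def)
  next
    case (Suc k)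
    have cs: "c (Suc k) \<in> confs 3 n" using assms(3,4) by (auto simp: c_def confs_def)
    have diff: "\<forall>l. l \<noteq> k \<longrightarrow> c k l = c (Suc k) l" by (auto simp: c_def)
    have diff': "\<forall>l. l \<noteq> k \<longrightarrow> c (Suc k) l = c k l" by (auto simp: c_def)
    have "f (c (Suc k)) i = f (c k) i"
    proof (cases "c k k = c (Suc k) k")
      case True
      then have "c k = c (Suc k)" using diff by (intro ext) (case_tac "x = k"; simp)
      then show ?thesis by simp
    next
      case False
      then have kp: "k \<noteq> p" using assms(5) by (auto simp: c_def)
      have kn: "k < n"
      proof (rule ccontr)
        assume "\<not> k < n"
        then have "a k = 0" "b k = 0" using assms(3,4) by (auto simp: confs_def)
        then show False using False by (simp add: c_def)
      qed
      have none: "interaction_graph 3 n f k i = None" using assms(2) kp by blast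
      then have nd: "\<forall>(a,b)\<in>jpairs 3 n k. f a i = f b i"
        using kn assms(1) unfolding interaction_graph_def by (auto split: if_splits)
      show ?thesis
      proof (cases "c k k < c (Suc k) k")
        case True
        then have "(c k, c (Suc k)) \<in> jpairs 3 n k" unfolding jpairs_def using Suc.IH cs diff by simp
        then show ?thesis using nd by auto
      next
        case F2: False
        then have "c (Suc k) k < c k k" using False by simp
        then have "(c (Suc k), c k) \<in> jpairs 3 n k" unfolding jpairs_def using Suc.IH cs diff' by simp
        then show ?thesis using nd by auto
      qed
    qed
    then show ?case using Suc.IH cs by simp
  qed
  have "c n = b" using assms(3,4) by (auto simp: c_def confs_def fun_eq_iff)
  then have "f b i = f a i" using ck[of n] by simp
  then show ?thesis by simp
qed

lemma arc_pair:
  assumes "interaction_graph 3 n f j i \<noteq> None"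
  shows "\<exists>a\<in>confs 3 n. \<exists>b\<in>confs 3 n. f a i \<noteq> f b i"
  using assms unfolding interaction_graph_def jpairs_def by (auto split: if_splits)

lemma three: "u < (3::nat) \<Longrightarrow> u = 0 \<or> u = 1 \<or> u = 2" by auto
lemma comb:
  fixes h1 h2 :: "nat \<Rightarrow> nat" and I :: "nat set"
  assumes "I \<subseteq> {..<3}" "x \<in> I" "y \<in> I" "x \<noteq> y"
    "\<exists>u w. u<w \<and> w<3 \<and> h1 u > h1 w" "\<exists>u w. u<w \<and> w<3 \<and> h1 u < h1 w"
    "\<forall>u w. u<w \<longrightarrow> w<3 \<longrightarrow> h2 u \<le> h2 w" "\<exists>u w. u<w \<and> w<3 \<and> h2 u \<noteq> h2 w"
  shows "(\<exists>a\<in>I. \<exists>b\<in>I. h1 a \<noteq> h1 b) \<or> (\<exists>a\<in>I. \<exists>b\<in>I. h2 a \<noteq> h2 b)"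
proof (rule ccontr)
  assume "\<not> ?thesis"
  then have c1: "\<forall>a\<in>I. \<forall>b\<in>I. h1 a = h1 b" and c2: "\<forall>a\<in>I. \<forall>b\<in>I. h2 a = h2 b" by blast+
  obtain u w where uw: "u<w" "w<3" "h1 u > h1 w" using assms(5) by blast
  obtain u' w' where uw': "u'<w'" "w'<3" "h1 u' < h1 w'" using assms(6) by blast
  obtain u2 w2 where uw2: "u2<w2" "w2<3" "h2 u2 \<noteq> h2 w2" using assms(8) by blast
  have m2: "h2 0 \<le> h2 1" "h2 1 \<le> h2 2" using assms(7)[rule_format, of 0 1] assms(7)[rule_format, of 1 2] by simp_all
  have xs: "x < 3" "y < 3" using assms(1-3) by auto
  have e: "u = 0 \<and> w = 1 \<or> u = 0 \<and> w = 2 \<or> u = 1 \<and> w = 2" using uw three[of u] three[of w] by auto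
  have e': "u' = 0 \<and> w' = 1 \<or> u' = 0 \<and> w' = 2 \<or> u' = 1 \<and> w' = 2" using uw' three[of u'] three[of w'] by auto
  have e2: "u2 = 0 \<and> w2 = 1 \<or> u2 = 0 \<and> w2 = 2 \<or> u2 = 1 \<and> w2 = 2" using uw2 three[of u2] three[of w2] by auto
  have m2': "h2 0 \<noteq> h2 2" using e2 uw2 m2 by auto
  have "0 \<in> I \<and> 1 \<in> I \<or> 1 \<in> I \<and> 2 \<in> I \<or> 0 \<in> I \<and> 2 \<in> I"
    using assms(2,3,4) three[OF xs(1)] three[OF xs(2)] by auto
  then show False
  proof (elim disjE)
    assume "0 \<in> I \<and> 1 \<in> I"
    then have "h1 0 = h1 1" using c1 by blast
    then show False using e e' uw uw' by auto
  next
    assume "1 \<in> I \<and> 2 \<in> I"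
    then have "h1 1 = h1 2" using c1 by blast
    then show False using e e' uw uw' by auto
  next
    assume "0 \<in> I \<and> 2 \<in> I"
    then show False using c2 m2' by blast
  qed
qed


lemma propagate:
  assumes fo: "fun_over 3 n f"
    and vn: "v < n" and c1n: "c1 < n" and c2n: "c2 < n"
    and in1: "\<forall>j. j \<noteq> v \<longrightarrow> interaction_graph 3 n f j c1 = None"
    and in2: "\<forall>j. j \<noteq> v \<longrightarrow> interaction_graph 3 n f j c2 = None"
    and s1: "interaction_graph 3 n f v c1 = Some Null"
    and s2: "interaction_graph 3 n f v c2 = Some Pos"
    and nc: "nonconst_at n f t v"
  shows "nonconst_at n f (Suc t) c1 \<or> nonconst_at n f (Suc t) c2"
proof -
  define e where "e w = (\<lambda>l. if l = v then w else (0::nat))" for w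
  have e_conf: "e w \<in> confs 3 n" if "w < 3" for w using vn that by (auto simp: e_def confs_def)
  define h where "h c w = f (e w) c" for c w
  have av: "a v < 3" if "a \<in> confs 3 n" for a using that vn by (auto simp: confs_def)
  have hval: "f a c = h c (a v)"
    if "a \<in> confs 3 n" "c < n" "\<forall>j. j \<noteq> v \<longrightarrow> interaction_graph 3 n f j c = None" for a c
  proof -
    have "f a c = f (e (a v)) c"
      by (rule locality[OF that(2) that(3) that(1) e_conf[OF av[OF that(1)]]]) (simp add: e_def)
    then show ?thesis by (simp add: h_def)
  qed
  have step: "(f^^Suc t) z c = h c ((f^^t) z v)"
    if "z \<in> confs 3 n" "c < n" "\<forall>j. j \<noteq> v \<longrightarrow> interaction_graph 3 n f j c = None" for z c
  proof -
    have "(f^^t) z \<in> confs 3 n" using funpow_confs[OF fo that(1)] .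
    then have "f ((f^^t) z) c = h c ((f^^t) z v)" using hval that(2,3) by blast
    then show ?thesis by simp
  qed
  have n1: "\<not>(\<forall>(a,b)\<in>jpairs 3 n v. f a c1 \<le> f b c1)" "\<not>(\<forall>(a,b)\<in>jpairs 3 n v. f a c1 \<ge> f b c1)"
    using s1 unfolding interaction_graph_def by (simp_all split: if_split_asm)
  have p2: "\<forall>(a,b)\<in>jpairs 3 n v. f a c2 \<le> f b c2" "\<exists>(a,b)\<in>jpairs 3 n v. f a c2 \<noteq> f b c2"
    using s2 unfolding interaction_graph_def by (simp_all split: if_split_asm)
  have jp: "a \<in> confs 3 n \<and> b \<in> confs 3 n \<and> a v < b v" if "(a,b) \<in> jpairs 3 n v" for a b
    using that by (simp add: jpairs_def)
  have H1a: "\<exists>u w. u<w \<and> w<3 \<and> h c1 u > h c1 w"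
  proof -
    obtain a b where ab: "(a,b) \<in> jpairs 3 n v" "\<not> f a c1 \<le> f b c1" using n1(1) by blast
    have "a \<in> confs 3 n" "b \<in> confs 3 n" "a v < b v" using jp[OF ab(1)] by auto
    then show ?thesis using ab(2) hval[OF _ c1n in1] av by (metis not_le)
  qed
  have H1b: "\<exists>u w. u<w \<and> w<3 \<and> h c1 u < h c1 w"
  proof -
    obtain a b where ab: "(a,b) \<in> jpairs 3 n v" "\<not> f a c1 \<ge> f b c1" using n1(2) by blast
    have "a \<in> confs 3 n" "b \<in> confs 3 n" "a v < b v" using jp[OF ab(1)] by auto
    then show ?thesis using ab(2) hval[OF _ c1n in1] av by (metis not_le)
  qed
  have H2a: "\<forall>u w. u<w \<longrightarrow> w<3 \<longrightarrow> h c2 u \<le> h c2 w"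
  proof (intro allI impI)
    fix u w :: nat assume uw: "u < w" "w < 3"
    have "(e u, e w) \<in> jpairs 3 n v"
      using e_conf uw unfolding jpairs_def by (auto simp: e_def)
    then show "h c2 u \<le> h c2 w" using p2(1) by (auto simp: h_def)
  qed
  have H2b: "\<exists>u w. u<w \<and> w<3 \<and> h c2 u \<noteq> h c2 w"
  proof -
    obtain a b where ab: "(a,b) \<in> jpairs 3 n v" "f a c2 \<noteq> f b c2" using p2(2) by blast
    have "a \<in> confs 3 n" "b \<in> confs 3 n" "a v < b v" using jp[OF ab(1)] by auto
    then show ?thesis using ab(2) hval[OF _ c2n in2] av by metis
  qed
  define I where "I = (\<lambda>z. (f^^t) z v) ` confs 3 n"
  have Isub: "I \<subseteq> {..<3}" using av funpow_confs[OF fo] by (auto simp: I_def)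
  obtain x y where xy: "x \<in> confs 3 n" "y \<in> confs 3 n" "(f^^t) x v \<noteq> (f^^t) y v"
    using nc unfolding nonconst_at_def by blast
  have "(\<exists>a\<in>I. \<exists>b\<in>I. h c1 a \<noteq> h c1 b) \<or> (\<exists>a\<in>I. \<exists>b\<in>I. h c2 a \<noteq> h c2 b)"
    by (rule comb[OF Isub _ _ xy(3) H1a H1b H2a H2b]) (use xy in \<open>simp_all add: I_def\<close>)
  then show ?thesis
  proof
    assume "\<exists>a\<in>I. \<exists>b\<in>I. h c1 a \<noteq> h c1 b"
    then obtain za zb where z: "za \<in> confs 3 n" "zb \<in> confs 3 n" "h c1 ((f^^t) za v) \<noteq> h c1 ((f^^t) zb v)"
      unfolding I_def by blast
    then have "(f^^Suc t) za c1 \<noteq> (f^^Suc t) zb c1" using step[OF _ c1n in1] by simp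
    then show ?thesis using z unfolding nonconst_at_def by blast
  next
    assume "\<exists>a\<in>I. \<exists>b\<in>I. h c2 a \<noteq> h c2 b"
    then obtain za zb where z: "za \<in> confs 3 n" "zb \<in> confs 3 n" "h c2 ((f^^t) za v) \<noteq> h c2 ((f^^t) zb v)"
      unfolding I_def by blast
    then have "(f^^Suc t) za c2 \<noteq> (f^^Suc t) zb c2" using step[OF _ c2n in2] by simp
    then show ?thesis using z unfolding nonconst_at_def by blast
  qed
qed



lemma class_bound:
  assumes fo: "fun_over 3 n f" and nil: "nilpotent 3 n f" and nc: "nonconst_at n f K v"
  shows "Suc K \<le> nil_class 3 n f"
proof (rule ccontr)
  assume "\<not> Suc K \<le> nil_class 3 n f"
  then have le: "nil_class 3 n f \<le> K" by simp
  have ic: "iter_const 3 n f (nil_class 3 n f)"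
    using nil unfolding nilpotent_def nil_class_def by (rule LeastI_ex)
  then obtain c where c: "\<forall>x\<in>confs 3 n. (f^^(nil_class 3 n f)) x = c"
    unfolding iter_const_def by blast
  obtain x y where xy: "x \<in> confs 3 n" "y \<in> confs 3 n" "(f^^K) x v \<noteq> (f^^K) y v"
    using nc unfolding nonconst_at_def by blast
  define d where "d = K - nil_class 3 n f"
  have K: "K = nil_class 3 n f + d" using le d_def by simp
  have "(f^^K) z = c" if "z \<in> confs 3 n" for z
  proof -
    have "(f^^K) z = (f^^(nil_class 3 n f)) ((f^^d) z)" unfolding K funpow_add by simp
    also have "\<dots> = c" using c funpow_confs[OF fo that] by blast
    finally show ?thesis .
  qed
  then show False using xy by simp
qed

definition GA :: "nat \<Rightarrow> sdigraph" where
  "GA m j i = (if i < 2^m \<and> j = i div 2 then Some (if even i then Null else Pos) else None)"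

lemma chainA:
  assumes fo: "fun_over 3 n f" and ig: "interaction_graph 3 n f = GA m" and mn: "2^m \<le> n"
  shows "t \<le> m \<Longrightarrow> \<exists>v<2^t. nonconst_at n f (Suc t) v"
proof (induction t)
  case 0
  have "interaction_graph 3 n f 0 0 \<noteq> None" using ig by (simp add: GA_def)
  then obtain a b where "a \<in> confs 3 n" "b \<in> confs 3 n" "f a 0 \<noteq> f b 0" using arc_pair by blast
  then have "nonconst_at n f (Suc 0) 0" unfolding nonconst_at_def by auto
  then show ?case by auto
next
  case (Suc t)
  then obtain v where v: "v < 2^t" "nonconst_at n f (Suc t) v" by auto
  have pm: "(2::nat)^Suc t \<le> 2^m" using Suc.prems by (intro power_increasing) auto
  have c2: "2*v+1 < 2^Suc t" using v(1) by simp
  have lt: "v < n" "2*v < n" "2*v+1 < n" using c2 pm mn by linarith+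
  have in1: "\<forall>j. j \<noteq> v \<longrightarrow> interaction_graph 3 n f j (2*v) = None" using ig by (simp add: GA_def)
  have in2: "\<forall>j. j \<noteq> v \<longrightarrow> interaction_graph 3 n f j (2*v+1) = None" using ig by (simp add: GA_def)
  have s1: "interaction_graph 3 n f v (2*v) = Some Null" using ig c2 pm by (simp add: GA_def)
  have s2: "interaction_graph 3 n f v (2*v+1) = Some Pos" using ig c2 pm by (simp add: GA_def)
  from propagate[OF fo lt in1 in2 s1 s2 v(2)]
  show ?case using c2 by (metis add_lessD1)
qed

lemma GA_on: "2^m \<le> n \<Longrightarrow> sdigraph_on n (GA m)"
  unfolding sdigraph_on_def GA_def by (auto split: if_splits)

definition GB :: "nat \<Rightarrow> sdigraph" where
  "GB m j i = (if i < 2^(m+1) - 1 \<and> j < 2^(m+1) - 1 then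
      (if i = 0 then (if 2^m - 1 \<le> j then Some Pos else None)
       else if j = (i - 1) div 2 then Some (if odd i then Null else Pos) else None) else None)"

lemma GB_on: "sdigraph_on (2^(m+1) - 1) (GB m)"
  unfolding sdigraph_on_def GB_def by (auto split: if_splits)

lemma chainB:
  assumes fo: "fun_over 3 n f" and ig: "interaction_graph 3 n f = GB m" and nN: "n = 2^(m+1) - 1"
  shows "t \<le> m \<Longrightarrow> \<exists>v<2^(Suc t) - 1. nonconst_at n f (Suc t) v"
proof (induction t)
  case 0
  have p: "(1::nat) \<le> 2^m" by simp
  have e2: "(2::nat)^(m+1) = 2*2^m" by simp
  have "2^m - 1 < (2::nat)^(m+1) - 1" unfolding e2 using p by linarith
  then have "interaction_graph 3 n f (2^m - 1) 0 \<noteq> None" using ig by (simp add: GB_def)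
  then obtain a b where "a \<in> confs 3 n" "b \<in> confs 3 n" "f a 0 \<noteq> f b 0" using arc_pair by blast
  then have "nonconst_at n f (Suc 0) 0" unfolding nonconst_at_def by auto
  then show ?case by auto
next
  case (Suc t)
  then obtain v where v: "v < 2^(Suc t) - 1" "nonconst_at n f (Suc t) v" by auto
  have pm: "(2::nat)^Suc (Suc t) \<le> 2^(m+1)" using Suc.prems by (intro power_increasing) auto
  have e4: "(2::nat)^Suc (Suc t) = 2 * 2^Suc t" by simp
  have c2: "2*v+2 < 2^(Suc (Suc t)) - 1" unfolding e4 using v(1) by linarith
  have c1: "2*v+1 < 2^(Suc (Suc t)) - 1" using c2 by linarith
  have lt: "v < n" "2*v+1 < n" "2*v+2 < n" using c2 pm nN by linarith+
  have in1: "\<forall>j. j \<noteq> v \<longrightarrow> interaction_graph 3 n f j (2*v+1) = None" unfolding ig by (simp add: GB_def)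
  have in2: "\<forall>j. j \<noteq> v \<longrightarrow> interaction_graph 3 n f j (2*v+2) = None" unfolding ig by (simp add: GB_def)
  have s1: "interaction_graph 3 n f v (2*v+1) = Some Null" unfolding ig GB_def using lt(1,2) unfolding nN by simp
  have s2: "interaction_graph 3 n f v (2*v+2) = Some Pos" unfolding ig GB_def using lt(1,3) unfolding nN by simp
  from propagate[OF fo lt in1 in2 s1 s2 v(2)]
  show ?case using c1 c2 by blast
qed



lemma GB_sc: "strongly_connected (2^(m+1) - 1) (GB m)"
proof -
  define N where "N = (2::nat)^(m+1) - 1"
  define E where "E = {(u, v). GB m u v \<noteq> None}"
  have e2: "(2::nat)^(m+1) = 2*2^m" by simp
  have p: "(1::nat) \<le> 2^m" by simp
  have down: "(j::nat) < N \<Longrightarrow> (0::nat, j) \<in> E\<^sup>*" for j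
  proof (induction j rule: less_induct)
    case (less j)
    show ?case
    proof (cases "j = 0")
      case True then show ?thesis by simp
    next
      case False
      define q where "q = (j - 1) div 2"
      have qj: "q < j" using False by (simp add: q_def)
      have "(0, q) \<in> E\<^sup>*" using less qj by simp
      moreover have "(q, j) \<in> E" using less.prems qj False unfolding E_def GB_def N_def q_def by simp
      ultimately show ?thesis by (rule rtrancl_into_rtrancl)
    qed
  qed
  have up: "\<forall>i::nat. N - i = (d::nat) \<longrightarrow> i < N \<longrightarrow> (i, 0) \<in> E\<^sup>*" for d
  proof (induction d rule: less_induct)
    case (less d)
    show ?case
    proof (intro allI impI)
      fix i :: nat assume di: "N - i = d" "i < N"
      show "(i, 0) \<in> E\<^sup>*"
      proof (cases "2^m - 1 \<le> i")
        case True
        have "(i, 0) \<in> E" using True di(2) unfolding E_def GB_def N_def by simp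
        then show ?thesis by blast
      next
        case False
        have cN: "2*i+1 < N" using False p unfolding N_def e2 by linarith
        have "(i, 2*i+1) \<in> E" using cN di(2) unfolding E_def GB_def N_def by simp
        moreover have "(2*i+1, 0) \<in> E\<^sup>*" using less[of "N - (2*i+1)"] cN di by auto
        ultimately show ?thesis by (rule converse_rtrancl_into_rtrancl)
      qed
    qed
  qed
  show ?thesis unfolding strongly_connected_def
  proof (intro allI impI)
    fix i j :: nat assume "i < 2^(m+1) - 1" "j < 2^(m+1) - 1"
    then have "(i, 0) \<in> E\<^sup>*" "(0, j) \<in> E\<^sup>*" using up down unfolding N_def by auto
    then show "(i, j) \<in> {(u, v). GB m u v \<noteq> None}\<^sup>*" unfolding E_def by (rule rtrancl_trans)
  qed
qed

lemma log_bound: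
  assumes "n \<ge> (1::nat)"
  shows "2 ^ nat \<lfloor>log 2 (real n)\<rfloor> \<le> n"
proof -
  define r where "r = log 2 (real n)"
  have r0: "r \<ge> 0" using assms by (simp add: r_def)
  have k: "real (nat \<lfloor>r\<rfloor>) \<le> r" using r0 by linarith
  have "(2::real) powr real (nat \<lfloor>r\<rfloor>) \<le> 2 powr r" using k by (intro powr_mono) auto
  also have "\<dots> = real n" using assms by (simp add: r_def)
  finally have "real (2 ^ nat \<lfloor>r\<rfloor>) \<le> real n" by (simp add: powr_realpow)
  then show ?thesis unfolding r_def by linarith
qed

theorem proposition5:
  fixes n :: nat
  assumes "n \<ge> 1"
  shows "(\<exists>G. sdigraph_on n G \<and>
            (\<forall>f. is_G_function 3 n G f \<and> nilpotent 3 n f \<longrightarrow>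
                 nil_class 3 n f \<ge> nat \<lfloor>log 2 (real n)\<rfloor> + 2))
       \<and> (n = 2 ^ (nat \<lfloor>log 2 (real n)\<rfloor> + 1) - 1 \<longrightarrow>
          (\<exists>G. sdigraph_on n G \<and> strongly_connected n G \<and>
            (\<forall>f. is_G_function 3 n G f \<and> nilpotent 3 n f \<longrightarrow>
                 nil_class 3 n f \<ge> nat \<lfloor>log 2 (real n)\<rfloor> + 2)))"
proof -
  define m where "m = nat \<lfloor>log 2 (real n)\<rfloor>"
  have mn: "2^m \<le> n" unfolding m_def using log_bound[OF assms] .
  have P1: "\<exists>G. sdigraph_on n G \<and>
            (\<forall>f. is_G_function 3 n G f \<and> nilpotent 3 n f \<longrightarrow> nil_class 3 n f \<ge> m + 2)"
  proof (intro exI conjI allI impI)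
    show "sdigraph_on n (GA m)" using GA_on[OF mn] .
    fix f assume f: "is_G_function 3 n (GA m) f \<and> nilpotent 3 n f"
    then have fo: "fun_over 3 n f" and ig: "interaction_graph 3 n f = GA m"
      by (auto simp: is_G_function_def)
    obtain v where "nonconst_at n f (Suc m) v" using chainA[OF fo ig mn, of m] by auto
    from class_bound[OF fo _ this] f show "nil_class 3 n f \<ge> m + 2" by simp
  qed
  have P2: "\<exists>G. sdigraph_on n G \<and> strongly_connected n G \<and>
            (\<forall>f. is_G_function 3 n G f \<and> nilpotent 3 n f \<longrightarrow> nil_class 3 n f \<ge> m + 2)"
    if nN: "n = 2 ^ (m + 1) - 1"
  proof (intro exI conjI allI impI)
    show "sdigraph_on n (GB m)" using GB_on[of m] nN by simp
    show "strongly_connected n (GB m)" using GB_sc[of m] nN by simp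
    fix f assume f: "is_G_function 3 n (GB m) f \<and> nilpotent 3 n f"
    then have fo: "fun_over 3 n f" and ig: "interaction_graph 3 n f = GB m"
      by (auto simp: is_G_function_def)
    obtain v where "nonconst_at n f (Suc m) v" using chainB[OF fo ig nN, of m] by auto
    from class_bound[OF fo _ this] f show "nil_class 3 n f \<ge> m + 2" by simp
  qed
  show ?thesis using P1 P2 unfolding m_def by blast
qed

end
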